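(* Let $q$ be a prime power, $6\le n\le q$, $\alpha_1,\dots,\alpha_n\in\mathbb{F}_q$ distinct, $u_1,\dots,u_n\in\mathbb{F}_q^*$, and $H\in\mathbb{F}_q^{5\times n}$ with $H_{ab}=u_b\alpha_b^{a-1}$ (so $\ker H$ has distance $6$). Then the number of $e\in\mathbb{F}_q^n$ with $|e|=3$ for which there exists $e'\in\mathbb{F}_q^n$, $e'\ne e$, $|e'|\le 3$, $He'=He$, is at most $$\frac{(n-3)(n-4)(n-5)}{6(q-1)^2}\cdot(q-1)^3\binom{n}{3}.$$
   Context: $|e|$ denotes the Hamming weight of $e\in\mathbb{F}_q^n$. *)

theory Defs
  imports Complex_Main "HOL-Library.Cardinality"
begin

definition vecs :: "nat \<Rightarrow> (nat \<Rightarrow> 'a::zero) set" where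
  "vecs n = {e. \<forall>i. n \<le> i \<longrightarrow> e i = 0}"

definition hamming_weight :: "nat \<Rightarrow> (nat \<Rightarrow> 'a::zero) \<Rightarrow> nat" where
  "hamming_weight n e = card {i \<in> {0..<n}. e i \<noteq> 0}"

text \<open>Parity-check matrix H with H_{ab} = u_b alpha_b^(a-1), a = 1..5, b = 1..n;
  here rows and columns are 0-indexed, so row a (a < 5) has entries u b * alpha b ^ a.\<close>
definition gen_rs_H :: "nat \<Rightarrow> (nat \<Rightarrow> 'a::field) \<Rightarrow> (nat \<Rightarrow> 'a) \<Rightarrow> nat \<Rightarrow> nat \<Rightarrow> 'a" where
  "gen_rs_H n alpha u a b = u b * alpha b ^ a"

definition syndrome :: "nat \<Rightarrow> (nat \<Rightarrow> 'a::field) \<Rightarrow> (nat \<Rightarrow> 'a) \<Rightarrow> (nat \<Rightarrow> 'a) \<Rightarrow> nat \<Rightarrow> 'a" where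
  "syndrome n alpha u e a = (if a < 5 then (\<Sum>b<n. gen_rs_H n alpha u a b * e b) else 0)"

end

theory Submission
  imports Defs "HOL-Computational_Algebra.Polynomial"
begin

lemma vander_zero:
  fixes alpha w :: "nat \<Rightarrow> 'a::field"
  assumes inj: "inj_on alpha F" and fin: "finite F" and cF: "card F \<le> 5"
    and S: "\<forall>a<5. (\<Sum>b\<in>F. w b * alpha b ^ a) = 0"
    and j: "j \<in> F"
  shows "w j = 0"
proof -
  define p where "p = (\<Prod>l\<in>F-{j}. [:- alpha l, 1:])"
  have "degree p \<le> sum (degree \<circ> (\<lambda>l. [:- alpha l, 1:])) (F-{j})"
    unfolding p_def by (rule degree_prod_sum_le) (use fin in auto)
  also have "\<dots> = card (F-{j})" by simp
  also have "\<dots> < 5" using cF j fin by (simp add: card_Diff_singleton)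
  finally have dp: "degree p < 5" .
  have "(\<Sum>b\<in>F. w b * poly p (alpha b)) = (\<Sum>b\<in>F. \<Sum>i\<le>degree p. coeff p i * (w b * alpha b ^ i))"
    by (simp add: poly_altdef sum_distrib_left algebra_simps)
  also have "\<dots> = (\<Sum>i\<le>degree p. coeff p i * (\<Sum>b\<in>F. w b * alpha b ^ i))"
    by (simp add: sum.swap[of _ F] sum_distrib_left)
  also have "\<dots> = 0" using S dp by simp
  finally have z: "(\<Sum>b\<in>F. w b * poly p (alpha b)) = 0" .
  have "(\<Sum>b\<in>F. w b * poly p (alpha b)) = w j * poly p (alpha j) + (\<Sum>b\<in>F-{j}. w b * poly p (alpha b))"
    using fin j by (simp add: sum.remove)
  also have "(\<Sum>b\<in>F-{j}. w b * poly p (alpha b)) = 0"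
  proof (rule sum.neutral, intro ballI)
    fix b assume b: "b \<in> F-{j}"
    have "poly p (alpha b) = (\<Prod>l\<in>F-{j}. alpha b - alpha l)" unfolding p_def by (simp add: poly_prod)
    also have "\<dots> = 0" using b fin by (intro prod_zero) auto
    finally show "w b * poly p (alpha b) = 0" by simp
  qed
  finally have z2: "w j * poly p (alpha j) = 0" using z by simp
  have "poly p (alpha j) = (\<Prod>l\<in>F-{j}. alpha j - alpha l)" unfolding p_def by (simp add: poly_prod)
  also have "\<dots> \<noteq> 0"
  proof -
    have "\<forall>l\<in>F-{j}. alpha j - alpha l \<noteq> 0" using inj j by (auto simp: inj_on_def)
    then show ?thesis using fin by simp
  qed
  finally show ?thesis using z2 by simp
qed

lemma choose3: "6 * (m choose 3) = m * (m - 1) * (m - (2::nat))"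
proof (cases "m \<ge> 3")
  case True
  have "\<exists>j. m = j + 3" using True by presburger
  then obtain j where m: "m = j + 3" by blast
  have "fact 3 * fact (m - 3) * (m choose 3) = fact m" using True by (rule binomial_fact_lemma)
  moreover have "fact m = (j+3)*(j+2)*(j+1)*(fact j::nat)"
    unfolding m by (simp add: fact_Suc algebra_simps numeral_eq_Suc)
  moreover have "fact (3::nat) = (6::nat)" by (simp add: fact_Suc numeral_eq_Suc)
  ultimately have "6 * fact j * (m choose 3) = (j+3)*(j+2)*(j+1)*(fact j::nat)"
    by (simp add: m)
  then have "fact j * (6 * (m choose 3)) = fact j * ((j+3)*(j+2)*(j+1))" by (simp add: algebra_simps)
  then have "6 * (m choose 3) = (j+3)*(j+2)*(j+1)" using fact_nonzero[of j] mult_left_cancel by blast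
  then show ?thesis by (simp add: m algebra_simps)
next
  case False
  then have "m = 0 \<or> m = 1 \<or> m = 2" by arith
  then show ?thesis by auto
qed

lemma code_zero:
  fixes alpha u c :: "nat \<Rightarrow> 'a::field"
  assumes inj: "inj_on alpha {0..<n}" and u: "\<forall>i<n. u i \<noteq> 0"
    and F: "F \<subseteq> {0..<n}" "card F \<le> 5" and out: "\<forall>i. i \<notin> F \<longrightarrow> c i = 0"
    and syn: "\<forall>a<5. (\<Sum>b<n. gen_rs_H n alpha u a b * c b) = 0"
  shows "c i = 0"
proof (cases "i \<in> F")
  case False then show ?thesis using out by simp
next
  case True
  have fin: "finite F" using F(1) finite_subset by blast
  have injF: "inj_on alpha F" using inj F(1) inj_on_subset by blast
  have "\<forall>a<5. (\<Sum>b\<in>F. (u b * c b) * alpha b ^ a) = 0"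
  proof (intro allI impI)
    fix a :: nat assume a: "a < 5"
    have "(\<Sum>b\<in>F. (u b * c b) * alpha b ^ a) = (\<Sum>b<n. gen_rs_H n alpha u a b * c b)"
      by (rule sum.mono_neutral_cong_left) (use F(1) out in \<open>auto simp: gen_rs_H_def mult.commute mult.left_commute\<close>)
    then show "(\<Sum>b\<in>F. (u b * c b) * alpha b ^ a) = 0" using syn a by simp
  qed
  from vander_zero[OF injF fin F(2) this True] have "u i * c i = 0" .
  moreover have "u i \<noteq> 0" using u True F(1) by auto
  ultimately show ?thesis by simp
qed

lemma syn_eq: "syndrome n alpha u e' = syndrome n alpha u e \<Longrightarrow> a < 5 \<Longrightarrow>
   (\<Sum>b<n. gen_rs_H n alpha u a b * e' b) = (\<Sum>b<n. gen_rs_H n alpha u a b * e b)"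
  by (drule fun_cong[of _ _ a]) (simp add: syndrome_def)

definition supp :: "nat \<Rightarrow> (nat \<Rightarrow> 'a::zero) \<Rightarrow> nat set" where
  "supp n e = {i \<in> {0..<n}. e i \<noteq> 0}"

lemma supp_sub: "supp n e \<subseteq> {0..<n}" by (auto simp: supp_def)
lemma supp_fin: "finite (supp n e)" using supp_sub finite_subset by blast
lemma hw_supp: "hamming_weight n e = card (supp n e)" by (simp add: hamming_weight_def supp_def)
lemma vecs_out: "e \<in> vecs n \<Longrightarrow> i \<notin> supp n e \<Longrightarrow> e i = 0"
  by (cases "i < n") (auto simp: vecs_def supp_def)

lemma key:
  fixes alpha u e e' :: "nat \<Rightarrow> 'a::field"
  assumes inj: "inj_on alpha {0..<n}" and u: "\<forall>i<n. u i \<noteq> 0"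
    and e: "e \<in> vecs n" "hamming_weight n e = 3"
    and e': "e' \<in> vecs n" "e' \<noteq> e" "hamming_weight n e' \<le> 3"
      "syndrome n alpha u e' = syndrome n alpha u e"
  shows "supp n e \<inter> supp n e' = {}" "card (supp n e') = 3"
proof -
  let ?S = "supp n e" and ?T = "supp n e'"
  have c6: "\<not> card (?S \<union> ?T) \<le> 5"
  proof
    assume c5: "card (?S \<union> ?T) \<le> 5"
    have "\<forall>i. e i - e' i = 0"
    proof
      fix i
      show "e i - e' i = 0"
      proof (rule code_zero[OF inj u, where F="?S \<union> ?T" and c="\<lambda>i. e i - e' i"])
        show "?S \<union> ?T \<subseteq> {0..<n}" using supp_sub by blast
        show "card (?S \<union> ?T) \<le> 5" by fact
        show "\<forall>i. i \<notin> ?S \<union> ?T \<longrightarrow> e i - e' i = 0" using vecs_out[OF e(1)] vecs_out[OF e'(1)] by auto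
        show "\<forall>a<5. (\<Sum>b<n. gen_rs_H n alpha u a b * (e b - e' b)) = 0"
          using syn_eq[OF e'(4)] by (simp add: right_diff_distrib sum_subtractf)
      qed
    qed
    then have "e = e'" by auto
    then show False using e'(2) by simp
  qed
  have cS: "card ?S = 3" using e(2) hw_supp by metis
  have cT: "card ?T \<le> 3" using e'(3) hw_supp by metis
  have U: "card (?S \<union> ?T) + card (?S \<inter> ?T) = card ?S + card ?T"
    using card_Un_Int[OF supp_fin supp_fin, of n e n e'] by linarith
  then show "card ?T = 3" using c6 cS cT by linarith
  have "card (?S \<inter> ?T) = 0" using U c6 cS cT by linarith
  then show "?S \<inter> ?T = {}" using supp_fin[of n e] by simp
qed


theorem mainTheorem11:
  fixes alpha u :: "nat \<Rightarrow> 'a::{finite,field}" and n :: nat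
  assumes "6 \<le> n" and "n \<le> CARD('a)"
    and "inj_on alpha {0..<n}"
    and "\<forall>i<n. u i \<noteq> 0"
  shows "real (card {e \<in> vecs n. hamming_weight n e = 3 \<and>
            (\<exists>e' \<in> vecs n. e' \<noteq> e \<and> hamming_weight n e' \<le> 3 \<and>
               syndrome n alpha u e' = syndrome n alpha u e)})
         \<le> (real ((n - 3) * (n - 4) * (n - 5)) / (6 * (real CARD('a) - 1)^2))
            * (real CARD('a) - 1)^3 * real (n choose 3)"
proof -
  note inj = assms(3) and u = assms(4)
  define P where "P = (\<lambda>e e'. e' \<in> vecs n \<and> e' \<noteq> e \<and> hamming_weight n e' \<le> 3 \<and>
               syndrome n alpha u e' = syndrome n alpha u e)"
  define A where "A = {e \<in> vecs n. hamming_weight n e = 3 \<and>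
            (\<exists>e' \<in> vecs n. e' \<noteq> e \<and> hamming_weight n e' \<le> 3 \<and>
               syndrome n alpha u e' = syndrome n alpha u e)}"
  define f where "f = (\<lambda>e. (supp n e, supp n (SOME e'. P e e'), e (Min (supp n e))))"
  define B where "B = Sigma {S. S \<subseteq> {0..<n} \<and> card S = 3}
      (\<lambda>S. {T. T \<subseteq> {0..<n} - S \<and> card T = 3} \<times> {k::'a. k \<noteq> 0})"
  have PA: "e \<in> vecs n \<and> hamming_weight n e = 3 \<and> P e (SOME e'. P e e')" if "e \<in> A" for e
  proof -
    have "\<exists>e'. P e e'" using that unfolding A_def P_def by blast
    then show ?thesis using that someI_ex[of "P e"] unfolding A_def by blast
  qed
  have props: "supp n e \<inter> supp n (SOME e'. P e e') = {} \<and> card (supp n (SOME e'. P e e')) = 3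
      \<and> card (supp n e) = 3 \<and> Min (supp n e) \<in> supp n e" if "e \<in> A" for e
  proof -
    have h: "e \<in> vecs n" "hamming_weight n e = 3" "P e (SOME e'. P e e')" using PA[OF that] by auto
    have c3: "card (supp n e) = 3" using h(2) hw_supp by metis
    then have "supp n e \<noteq> {}" by auto
    then have "Min (supp n e) \<in> supp n e" using supp_fin Min_in by blast
    then show ?thesis using key[OF inj u h(1,2)] h(3) c3 unfolding P_def by blast
  qed
  have "inj_on f A"
  proof (rule inj_onI)
    fix e1 e2 assume e1: "e1 \<in> A" and e2: "e2 \<in> A" and fe: "f e1 = f e2"
    define e1' where "e1' = (SOME e'. P e1 e')"
    define e2' where "e2' = (SOME e'. P e2 e')"
    have h1: "e1 \<in> vecs n" "P e1 e1'" using PA[OF e1] e1'_def by auto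
    have h2: "e2 \<in> vecs n" "P e2 e2'" using PA[OF e2] e2'_def by auto
    have p1: "supp n e1 \<inter> supp n e1' = {}" "card (supp n e1') = 3" "card (supp n e1) = 3"
      "Min (supp n e1) \<in> supp n e1" using props[OF e1] e1'_def by auto
    have p2: "supp n e2 \<inter> supp n e2' = {}" using props[OF e2] e2'_def by auto
    let ?S = "supp n e1" and ?T = "supp n e1'" and ?m = "Min (supp n e1)"
    have SS: "supp n e2 = ?S" and TT: "supp n e2' = ?T" and mm: "e1 ?m = e2 ?m"
      using fe unfolding f_def e1'_def e2'_def by auto
    have v1': "e1' \<in> vecs n" and v2': "e2' \<in> vecs n" using h1 h2 unfolding P_def by auto
    have d0: "\<forall>i. (e1 i - e1' i) - (e2 i - e2' i) = 0"
    proof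
      fix i
      show "(e1 i - e1' i) - (e2 i - e2' i) = 0"
      proof (rule code_zero[OF inj u, where F="(?S \<union> ?T) - {?m}" and c="\<lambda>i. (e1 i - e1' i) - (e2 i - e2' i)"])
        show "(?S \<union> ?T) - {?m} \<subseteq> {0..<n}" using supp_sub by blast
        have "card (?S \<union> ?T) \<le> 6" using card_Un_le[of ?S ?T] p1 by simp
        then show "card ((?S \<union> ?T) - {?m}) \<le> 5" using p1(4) supp_fin
          by (simp add: card_Diff_singleton)
        have z1: "e1' ?m = 0" using vecs_out[OF v1'] p1(1,4) by blast
        have z2: "e2' ?m = 0" using vecs_out[OF v2'] p1(1,4) TT by blast
        show "\<forall>i. i \<notin> (?S \<union> ?T) - {?m} \<longrightarrow> (e1 i - e1' i) - (e2 i - e2' i) = 0"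
        proof (intro allI impI)
          fix i assume "i \<notin> (?S \<union> ?T) - {?m}"
          then consider "i = ?m" | "i \<notin> ?S" "i \<notin> ?T" by blast
          then show "(e1 i - e1' i) - (e2 i - e2' i) = 0"
          proof cases
            case 1 then show ?thesis using z1 z2 mm by simp
          next
            case 2
            then have "e1 i = 0" "e2 i = 0" "e1' i = 0" "e2' i = 0"
              using vecs_out[OF h1(1)] vecs_out[OF h2(1)]
                vecs_out[OF v1'] vecs_out[OF v2'] SS TT by auto
            then show ?thesis by simp
          qed
        qed
        have s1: "syndrome n alpha u e1' = syndrome n alpha u e1" using h1 unfolding P_def by auto
        have s2: "syndrome n alpha u e2' = syndrome n alpha u e2" using h2 unfolding P_def by auto
        show "\<forall>a<5. (\<Sum>b<n. gen_rs_H n alpha u a b * ((e1 b - e1' b) - (e2 b - e2' b))) = 0"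
          using syn_eq[OF s1] syn_eq[OF s2] by (simp add: right_diff_distrib sum_subtractf)
      qed
    qed
    show "e1 = e2"
    proof
      fix i
      show "e1 i = e2 i"
      proof (cases "i \<in> ?S")
        case True
        have "e1' i = 0" using vecs_out[OF v1'] p1(1) True by blast
        moreover have "e2' i = 0" using vecs_out[OF v2'] p2 SS True by blast
        ultimately show ?thesis using d0 by (metis diff_zero eq_iff_diff_eq_0)
      next
        case False
        then show ?thesis using vecs_out[OF h1(1)] vecs_out[OF h2(1)] SS by metis
      qed
    qed
  qed
  moreover have "f ` A \<subseteq> B"
  proof
    fix x assume "x \<in> f ` A"
    then obtain e where e: "e \<in> A" and x: "x = f e" by blast
    have p: "supp n e \<inter> supp n (SOME e'. P e e') = {}" "card (supp n (SOME e'. P e e')) = 3"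
      "card (supp n e) = 3" "Min (supp n e) \<in> supp n e" using props[OF e] by auto
    have "e (Min (supp n e)) \<noteq> 0" using p(4) by (simp add: supp_def)
    then show "x \<in> B" using p supp_sub unfolding B_def x f_def by blast
  qed
  moreover have finB: "finite B" unfolding B_def by (rule finite_SigmaI) auto
  ultimately have le: "card A \<le> card B" by (meson card_inj_on_le)
  have cK: "card {k::'a. k \<noteq> 0} = CARD('a) - 1"
  proof -
    have "{k::'a. k \<noteq> 0} = UNIV - {0}" by auto
    then show ?thesis by (simp add: card_Diff_singleton)
  qed
  have "card B = (\<Sum>S\<in>{S. S \<subseteq> {0..<n} \<and> card S = 3}. card ({T. T \<subseteq> {0..<n} - S \<and> card T = 3} \<times> {k::'a. k \<noteq> 0}))"
    unfolding B_def by (rule card_SigmaI) auto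
  also have "\<dots> = (\<Sum>S\<in>{S. S \<subseteq> {0..<n} \<and> card S = 3}. ((n - 3) choose 3) * (CARD('a) - 1))"
  proof (rule sum.cong[OF refl])
    fix S assume "S \<in> {S. S \<subseteq> {0..<n} \<and> card S = 3}"
    then have S: "S \<subseteq> {0..<n}" "card S = 3" by auto
    have "card ({0..<n} - S) = n - 3" using S by (simp add: card_Diff_subset finite_subset)
    then have "card {T. T \<subseteq> {0..<n} - S \<and> card T = 3} = (n - 3) choose 3"
      using n_subsets[of "{0..<n} - S" 3] by simp
    then show "card ({T. T \<subseteq> {0..<n} - S \<and> card T = 3} \<times> {k::'a. k \<noteq> 0}) = ((n - 3) choose 3) * (CARD('a) - 1)"
      by (simp add: card_cartesian_product cK)
  qed
  also have "\<dots> = (n choose 3) * ((n - 3) choose 3) * (CARD('a) - 1)"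
    using n_subsets[of "{0..<n}" 3] by simp
  finally have cB: "card B = (n choose 3) * ((n - 3) choose 3) * (CARD('a) - 1)" .
  have six: "6 * ((n - 3) choose 3) = (n - 3) * (n - 4) * (n - 5)"
    using choose3[of "n-3"] by (simp add: diff_diff_add)
  have q1: "real CARD('a) - 1 > 0" using assms(1,2) by simp
  have qq: "real (CARD('a) - 1) = real CARD('a) - 1" using assms(1,2) by (simp add: of_nat_diff)
  have "real (card A) \<le> real (n choose 3) * real ((n - 3) choose 3) * (real CARD('a) - 1)"
    using le cB qq by (metis of_nat_le_iff of_nat_mult)
  also have "\<dots> = real ((n - 3) * (n - 4) * (n - 5)) / 6 * (real CARD('a) - 1) * real (n choose 3)"
  proof -
    have r: "real ((n - 3) * (n - 4) * (n - 5)) = 6 * real ((n - 3) choose 3)"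
      using six by (metis of_nat_mult of_nat_numeral)
    show ?thesis unfolding r by simp
  qed
  also have "\<dots> = (real ((n - 3) * (n - 4) * (n - 5)) / (6 * (real CARD('a) - 1)^2))
            * (real CARD('a) - 1)^3 * real (n choose 3)"
  proof -
    have gen: "\<And>X x C::real. x \<noteq> 0 \<Longrightarrow> X / 6 * x * C = X / (6 * x^2) * x^3 * C"
      by (simp add: power2_eq_square power3_eq_cube field_simps)
    show ?thesis using q1 by (intro gen) simp
  qed
  finally show ?thesis unfolding A_def .
qed

end
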